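(* Let $G$ be the digraph with vertex set $\{v_1,\dots,v_{17}\}$ and the $27$ arcs $(v_1,v_2)$, $(v_2,v_5)$, $(v_2,v_3)$, $(v_3,v_5)$, $(v_3,v_4)$, $(v_4,v_5)$, $(v_5,v_9)$, $(v_5,v_7)$, $(v_5,v_6)$, $(v_6,v_7)$, $(v_7,v_9)$, $(v_7,v_8)$, $(v_8,v_9)$, $(v_9,v_{16})$, $(v_9,v_{13})$, $(v_9,v_{11})$, $(v_9,v_{10})$, $(v_{10},v_{11})$, $(v_{11},v_{13})$, $(v_{11},v_{12})$, $(v_{12},v_{13})$, $(v_{13},v_{16})$, $(v_{13},v_{15})$, $(v_{13},v_{14})$, $(v_{14},v_{15})$, $(v_{15},v_{16})$, $(v_{16},v_{17})$. Then $G$ is an esp-digraph and $\chi'_o(G)=7$. In particular the bound $\chi'_o(G)\le 7$ for esp-digraphs is best possible.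
   Context: An oriented $r$-arc-coloring of a digraph $G=(V,E)$ is a map $c:E\to\{1,\dots,r\}$ such that (i) $c((u,v))\ne c((v,w))$ for every two arcs $(u,v),(v,w)\in E$, and (ii) $c((u,v))\ne c((y,z))$ for all arcs $(u,v),(v,w),(x,y),(y,z)\in E$ with $c((v,w))=c((x,y))$. The oriented chromatic index $\chi'_o(G)$ is the smallest $r$ for which such a coloring exists. Edge series-parallel (multi)digraphs (esp-digraphs) are defined recursively, each with a distinguished source and sink: (i) a digraph with two distinct vertices $u,v$ and the single arc $(u,v)$ is an esp-digraph with source $u$ and sink $v$; (ii) if $G_1,G_2$ are vertex-disjoint esp-digraphs, then the parallel composition $G_1\cup G_2$ (identify the source of $G_1$ with the source of $G_2$ and the sink of $G_1$ with the sink of $G_2$; arcs are united, possibly creating parallel arcs) is an esp-digraph with these identified source and sink, and the series composition $G_1\times G_2$ (identify the sink of $G_1$ with the source of $G_2$) is an esp-digraph with source the source of $G_1$ and sink the sink of $G_2$. *)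

theory Defs
  imports Main "HOL-Library.Multiset"
begin

definition arc_verts :: "('a \<times> 'a) multiset \<Rightarrow> 'a set" where
  "arc_verts A = fst ` set_mset A \<union> snd ` set_mset A"

text \<open>Composition of vertex-disjoint esp-digraphs with identification of
  the terminals is modelled on labelled graphs: the two parts may share exactly the
  identified vertices.  (Esp-digraphs have no isolated vertices, so the vertex set is
  the set of endpoints of arcs.)\<close>
inductive esp :: "('a \<times> 'a) multiset \<Rightarrow> 'a \<Rightarrow> 'a \<Rightarrow> bool" where
  single: "u \<noteq> v \<Longrightarrow> esp {#(u, v)#} u v"
| parallel: "esp A1 s t \<Longrightarrow> esp A2 s t \<Longrightarrow> arc_verts A1 \<inter> arc_verts A2 = {s, t}
     \<Longrightarrow> esp (A1 + A2) s t"
| series: "esp A1 s m \<Longrightarrow> esp A2 m t \<Longrightarrow> arc_verts A1 \<inter> arc_verts A2 = {m}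
     \<Longrightarrow> esp (A1 + A2) s t"

definition is_esp_digraph :: "'a set \<Rightarrow> ('a \<times> 'a) multiset \<Rightarrow> bool" where
  "is_esp_digraph V A \<longleftrightarrow> V = arc_verts A \<and> (\<exists>s t. esp A s t)"

definition oriented_arc_coloring :: "('a \<times> 'a) set \<Rightarrow> nat \<Rightarrow> ('a \<times> 'a \<Rightarrow> nat) \<Rightarrow> bool" where
  "oriented_arc_coloring E r c \<longleftrightarrow>
     (\<forall>e\<in>E. c e \<in> {1..r}) \<and>
     (\<forall>u v w. (u, v) \<in> E \<and> (v, w) \<in> E \<longrightarrow> c (u, v) \<noteq> c (v, w)) \<and>
     (\<forall>u v w x y z. (u, v) \<in> E \<and> (v, w) \<in> E \<and> (x, y) \<in> E \<and> (y, z) \<in> E \<and>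
        c (v, w) = c (x, y) \<longrightarrow> c (u, v) \<noteq> c (y, z))"

definition oriented_chromatic_index :: "('a \<times> 'a) set \<Rightarrow> nat" where
  "oriented_chromatic_index E = (LEAST r. \<exists>c. oriented_arc_coloring E r c)"

definition G_arcs :: "(nat \<times> nat) list" where
  "G_arcs = [(1,2), (2,5), (2,3), (3,5), (3,4), (4,5), (5,9), (5,7), (5,6), (6,7),
             (7,9), (7,8), (8,9), (9,16), (9,13), (9,11), (9,10), (10,11), (11,13),
             (11,12), (12,13), (13,16), (13,15), (13,14), (14,15), (15,16), (16,17)]"

definition G_verts :: "nat set" where
  "G_verts = {1..17}"

end

theory Submission
  imports Defs
begin

lemma arc_verts_mset: "arc_verts (mset xs) = fst ` set xs \<union> snd ` set xs"
  by (simp add: arc_verts_def)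

lemma sg: "u \<noteq> v \<Longrightarrow> esp (mset [(u, v)]) u v"
  using esp.single by simp

lemma par: "esp (mset xs) s t \<Longrightarrow> esp (mset ys) s t \<Longrightarrow>
  arc_verts (mset xs) \<inter> arc_verts (mset ys) = {s, t} \<Longrightarrow> esp (mset (xs @ ys)) s t"
  using esp.parallel by fastforce

lemma ser: "esp (mset xs) s m \<Longrightarrow> esp (mset ys) m t \<Longrightarrow>
  arc_verts (mset xs) \<inter> arc_verts (mset ys) = {m} \<Longrightarrow> esp (mset (xs @ ys)) s t"
  using esp.series by fastforce

lemma esp_G: "esp (mset ([(1,2)] @ (([(2,5)] @ ([(2,3)] @ ([(3,5)] @ ([(3,4)] @ [(4,5)])))) @ (([(5,9)] @ (([(5,7)] @ ([(5,6)] @ [(6,7)])) @ ([(7,9)] @ ([(7,8)] @ [(8,9)])))) @ (([(9,16)] @ (([(9,13)] @ (([(9,11)] @ ([(9,10)] @ [(10,11)])) @ ([(11,13)] @ ([(11,12)] @ [(12,13)])))) @ ([(13,16)] @ (([(13,15)] @ ([(13,14)] @ [(14,15)])) @ [(15,16)])))) @ [(16,17)]))))) (1::nat) 17"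
  apply (rule ser[where m=2])
  apply (rule sg) apply simp
  apply (rule ser[where m=5])
  apply (rule par)
  apply (rule sg) apply simp
  apply (rule ser[where m=3])
  apply (rule sg) apply simp
  apply (rule par)
  apply (rule sg) apply simp
  apply (rule ser[where m=4])
  apply (rule sg) apply simp
  apply (rule sg) apply simp
  apply (auto simp: arc_verts_def)[1]
  apply (auto simp: arc_verts_def)[1]
  apply (auto simp: arc_verts_def)[1]
  apply (auto simp: arc_verts_def)[1]
  apply (rule ser[where m=9])
  apply (rule par)
  apply (rule sg) apply simp
  apply (rule ser[where m=7])
  apply (rule par)
  apply (rule sg) apply simp
  apply (rule ser[where m=6])
  apply (rule sg) apply simp
  apply (rule sg) apply simp
  apply (auto simp: arc_verts_def)[1]
  apply (auto simp: arc_verts_def)[1]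
  apply (rule par)
  apply (rule sg) apply simp
  apply (rule ser[where m=8])
  apply (rule sg) apply simp
  apply (rule sg) apply simp
  apply (auto simp: arc_verts_def)[1]
  apply (auto simp: arc_verts_def)[1]
  apply (auto simp: arc_verts_def)[1]
  apply (auto simp: arc_verts_def)[1]
  apply (rule ser[where m=16])
  apply (rule par)
  apply (rule sg) apply simp
  apply (rule ser[where m=13])
  apply (rule par)
  apply (rule sg) apply simp
  apply (rule ser[where m=11])
  apply (rule par)
  apply (rule sg) apply simp
  apply (rule ser[where m=10])
  apply (rule sg) apply simp
  apply (rule sg) apply simp
  apply (auto simp: arc_verts_def)[1]
  apply (auto simp: arc_verts_def)[1]
  apply (rule par)
  apply (rule sg) apply simp
  apply (rule ser[where m=12])
  apply (rule sg) apply simp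
  apply (rule sg) apply simp
  apply (auto simp: arc_verts_def)[1]
  apply (auto simp: arc_verts_def)[1]
  apply (auto simp: arc_verts_def)[1]
  apply (auto simp: arc_verts_def)[1]
  apply (rule par)
  apply (rule sg) apply simp
  apply (rule ser[where m=15])
  apply (rule par)
  apply (rule sg) apply simp
  apply (rule ser[where m=14])
  apply (rule sg) apply simp
  apply (rule sg) apply simp
  apply (auto simp: arc_verts_def)[1]
  apply (auto simp: arc_verts_def)[1]
  apply (rule sg) apply simp
  apply (auto simp: arc_verts_def)[1]
  apply (auto simp: arc_verts_def)[1]
  apply (auto simp: arc_verts_def)[1]
  apply (auto simp: arc_verts_def)[1]
  apply (rule sg) apply simp
  apply (auto simp: arc_verts_def)[1]
  apply (auto simp: arc_verts_def)[1]
  apply (auto simp: arc_verts_def)[1]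
  apply (auto simp: arc_verts_def)[1]
  done

lemma is_esp_G: "is_esp_digraph G_verts (mset G_arcs)"
proof -
  have e: "esp (mset G_arcs) (1::nat) 17" using esp_G by (simp add: G_arcs_def)
  have "G_verts = arc_verts (mset G_arcs)"
    by (simp add: G_verts_def G_arcs_def arc_verts_def) (auto; presburger)
  with e show ?thesis unfolding is_esp_digraph_def by blast
qed

definition Pg :: "(nat\<times>nat) list" where "Pg = [(0,1), (0,2), (1,6), (1,7), (1,8), (2,3), (2,4), (3,6), (3,7), (3,8), (4,5), (5,6), (5,7), (5,8), (6,13), (6,14), (6,15), (6,16), (7,10), (7,11), (8,9), (9,10), (9,11), (10,13), (10,14), (10,15), (10,16), (11,12), (12,13), (12,14), (12,15), (12,16), (13,26), (14,21), (14,22), (14,23), (15,18), (15,19), (16,17), (17,18), (17,19), (18,21), (18,22), (18,23), (19,20), (20,21), (20,22), (20,23), (21,26), (22,25), (23,24), (24,25), (25,26)]"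

lemma core:
  fixes X :: "nat \<Rightarrow> nat \<Rightarrow> bool" and Y :: "nat \<Rightarrow> nat \<Rightarrow> bool"
  assumes a1: "\<forall>k\<in>set [0,1,2,3,4,5,6,7,8,9,10,11,12,13,14,15,16,17,18,19,20,21,22,23,24,25,26]. \<exists>a\<in>set [0,1,2,3,4,5]. X k a"
    and a2: "\<forall>(i,j)\<in>set Pg. \<forall>a\<in>set [0,1,2,3,4,5]. \<not> X i a \<or> \<not> X j a"
    and a3: "\<forall>(i,j)\<in>set Pg. \<forall>a\<in>set [0,1,2,3,4,5]. \<forall>b\<in>set [0,1,2,3,4,5]. \<not> X i a \<or> \<not> X j b \<or> Y a b"
    and a4: "\<forall>a\<in>set [0,1,2,3,4,5]. \<forall>b\<in>set [0,1,2,3,4,5]. \<not> Y a b \<or> \<not> Y b a"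
    and a5: "X 0 0" and a6: "X 1 1"
  shows False
  using a1 a2 a3 a4 a5 a6
  apply (simp only: Pg_def list.set ball_simps bex_simps prod.case)
  by sat

lemma Pg_ok: "\<forall>(i,j)\<in>set Pg. i < length G_arcs \<and> j < length G_arcs \<and> snd (G_arcs!i) = fst (G_arcs!j)"
  by (simp add: Pg_def G_arcs_def)

lemma Pg_arcs:
  assumes "(i,j) \<in> set Pg"
  obtains u v w where "G_arcs!i = (u,v)" "G_arcs!j = (v,w)" "(u,v) \<in> set G_arcs" "(v,w) \<in> set G_arcs"
proof -
  from Pg_ok assms have h: "i < length G_arcs" "j < length G_arcs" "snd (G_arcs!i) = fst (G_arcs!j)"
    by auto
  have 1: "G_arcs!i = (fst (G_arcs!i), snd (G_arcs!i))" by simp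
  have 2: "G_arcs!j = (snd (G_arcs!i), snd (G_arcs!j))" using h(3) by (metis prod.collapse)
  show ?thesis
    using that[OF 1 2] nth_mem[OF h(1)] nth_mem[OF h(2)] 1 2 by metis
qed

definition sw :: "nat \<Rightarrow> nat \<Rightarrow> nat \<Rightarrow> nat" where
  "sw a b z = (if z = a then b else if z = b then a else z)"

lemma sw_inj: "sw a b x = sw a b y \<longleftrightarrow> x = y"
  by (auto simp: sw_def)

lemma oac_sw:
  assumes "oriented_arc_coloring E r c" "a \<in> {1..r}" "b \<in> {1..r}"
  shows "oriented_arc_coloring E r (sw a b \<circ> c)"
  using assms unfolding oriented_arc_coloring_def
  apply (simp only: comp_apply sw_inj)
  apply (intro conjI)
  apply (metis sw_def)
  apply blast
  apply blast
  done

lemma oac_mono: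
  assumes "oriented_arc_coloring E r c" "r \<le> s"
  shows "oriented_arc_coloring E s c"
  using assms unfolding oriented_arc_coloring_def by fastforce

lemma no6:
  assumes c: "oriented_arc_coloring (set G_arcs) 6 c"
  shows False
proof -
  have in12: "(1,2) \<in> set G_arcs" and in25: "(2,5) \<in> set G_arcs" by (simp_all add: G_arcs_def)
  define p where "p = c (1,2)"
  define q where "q = c (2,5)"
  have pq: "p \<noteq> q" using c in12 in25 unfolding oriented_arc_coloring_def p_def q_def by blast
  have p6: "p \<in> {1..6}" and q6: "q \<in> {1..6}"
    using c in12 in25 unfolding oriented_arc_coloring_def p_def q_def by auto
  define q' where "q' = sw p 1 q"
  have q'6: "q' \<in> {1..6}" using p6 q6 by (auto simp: q'_def sw_def)
  have q'1: "q' \<noteq> 1" using pq by (auto simp: q'_def sw_def)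
  define c1 where "c1 = sw q' 2 \<circ> (sw p 1 \<circ> c)"
  have c1: "oriented_arc_coloring (set G_arcs) 6 c1"
    unfolding c1_def by (rule oac_sw[OF oac_sw[OF c p6]]) (use q'6 in auto)
  have c1a: "c1 (1,2) = 1" using q'1 unfolding c1_def by (simp add: sw_def p_def)
  have c1b: "c1 (2,5) = 2" unfolding c1_def by (simp add: sw_def q'_def q_def)
  define X where "X k a = (c1 (G_arcs!k) = Suc a)" for k a
  define Y where "Y a b = (\<exists>(i,j)\<in>set Pg. X i a \<and> X j b)" for a b
  have cE: "c1 e \<in> {1..6}" if "e \<in> set G_arcs" for e using c1 that unfolding oriented_arc_coloring_def by blast
  have a1: "\<forall>k\<in>set [0,1,2,3,4,5,6,7,8,9,10,11,12,13,14,15,16,17,18,19,20,21,22,23,24,25,26]. \<exists>a\<in>set [0,1,2,3,4,5]. X k a"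
  proof
    fix k assume "k \<in> set [0::nat,1,2,3,4,5,6,7,8,9,10,11,12,13,14,15,16,17,18,19,20,21,22,23,24,25,26]"
    then have "k < length G_arcs" by (simp add: G_arcs_def) presburger
    then have "c1 (G_arcs!k) \<in> {1..6}" using cE nth_mem by blast
    then show "\<exists>a\<in>set [0,1,2,3,4,5]. X k a" unfolding X_def
      by (intro bexI[of _ "c1 (G_arcs!k) - 1"]) auto
  qed
  have a2: "\<forall>(i,j)\<in>set Pg. \<forall>a\<in>set [0,1,2,3,4,5]. \<not> X i a \<or> \<not> X j a"
  proof (clarify)
    fix i j a assume ij: "(i,j) \<in> set Pg" and "X i a" "X j a"
    obtain u v w where "G_arcs!i = (u,v)" "G_arcs!j = (v,w)" "(u,v) \<in> set G_arcs" "(v,w) \<in> set G_arcs"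
      using ij by (rule Pg_arcs)
    with c1 \<open>X i a\<close> \<open>X j a\<close> show False unfolding X_def oriented_arc_coloring_def by metis
  qed
  have a3: "\<forall>(i,j)\<in>set Pg. \<forall>a\<in>set [0,1,2,3,4,5]. \<forall>b\<in>set [0,1,2,3,4,5]. \<not> X i a \<or> \<not> X j b \<or> Y a b"
    unfolding Y_def by blast
  have a4: "\<forall>a\<in>set [0,1,2,3,4,5]. \<forall>b\<in>set [0,1,2,3,4,5]. \<not> Y a b \<or> \<not> Y b a"
  proof (clarify)
    fix a b assume "Y a b" "Y b a"
    then obtain i j i' j' where ij: "(i,j) \<in> set Pg" "X i a" "X j b" and ij': "(i',j') \<in> set Pg" "X i' b" "X j' a"
      unfolding Y_def by blast
    obtain u v w where A: "G_arcs!i = (u,v)" "G_arcs!j = (v,w)" "(u,v) \<in> set G_arcs" "(v,w) \<in> set G_arcs"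
      using ij(1) by (rule Pg_arcs)
    obtain x y z where B: "G_arcs!i' = (x,y)" "G_arcs!j' = (y,z)" "(x,y) \<in> set G_arcs" "(y,z) \<in> set G_arcs"
      using ij'(1) by (rule Pg_arcs)
    have "c1 (v,w) = c1 (x,y)" "c1 (u,v) = c1 (y,z)" using ij ij' A B unfolding X_def by auto
    with A B c1 show False unfolding oriented_arc_coloring_def by blast
  qed
  have a5: "X 0 0" using c1a by (simp add: X_def G_arcs_def)
  have a6: "X 1 1" using c1b by (simp add: X_def G_arcs_def)
  show False by (rule core[OF a1 a2 a3 a4 a5 a6])
qed

definition col7 :: "nat list" where
  "col7 = [1, 2, 2, 3, 3, 1, 4, 4, 4, 5, 6, 6, 1, 7, 7, 7, 7, 2, 3, 3, 4, 5, 5, 5, 6, 1, 2]"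

definition c7 :: "nat \<times> nat \<Rightarrow> nat" where
  "c7 e = (case map_of (zip G_arcs col7) e of Some x \<Rightarrow> x | None \<Rightarrow> 1)"

definition Qp :: "('a \<times> 'a) list \<Rightarrow> (('a \<times> 'a) \<times> ('a \<times> 'a)) list" where
  "Qp A = [(e,f). e \<leftarrow> A, f \<leftarrow> A, snd e = fst f]"

lemma oac_from_list:
  assumes "\<forall>e\<in>set A. c e \<in> {1..r}"
    and "\<forall>(a,b)\<in>set (map (\<lambda>(e,f). (c e, c f)) (Qp A)). a \<noteq> b \<and> (b,a) \<notin> set (map (\<lambda>(e,f). (c e, c f)) (Qp A))"
  shows "oriented_arc_coloring (set A) r c"
  unfolding oriented_arc_coloring_def
proof (intro conjI allI impI)
  show "\<forall>e\<in>set A. c e \<in> {1..r}" by fact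
next
  fix u v w assume h: "(u, v) \<in> set A \<and> (v, w) \<in> set A"
  then have "((u,v),(v,w)) \<in> set (Qp A)" by (auto simp: Qp_def)
  then show "c (u, v) \<noteq> c (v, w)" using assms(2) by force
next
  fix u v w x y z assume h: "(u, v) \<in> set A \<and> (v, w) \<in> set A \<and> (x, y) \<in> set A \<and> (y, z) \<in> set A \<and> c (v, w) = c (x, y)"
  then have 1: "((u,v),(v,w)) \<in> set (Qp A)" and 2: "((x,y),(y,z)) \<in> set (Qp A)" by (auto simp: Qp_def)
  show "c (u, v) \<noteq> c (y, z)"
  proof
    assume e: "c (u, v) = c (y, z)"
    have "(c (u,v), c (v,w)) \<in> set (map (\<lambda>(e,f). (c e, c f)) (Qp A))" using 1 by force
    moreover have "(c (v,w), c (u,v)) \<in> set (map (\<lambda>(e,f). (c e, c f)) (Qp A))"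
      using 2 e h by force
    ultimately show False using assms(2) by fastforce
  qed
qed

lemma c7_ok: "oriented_arc_coloring (set G_arcs) 7 c7"
  by (rule oac_from_list) code_simp+

theorem mainTheorem7:
  shows "is_esp_digraph G_verts (mset G_arcs) \<and>
         oriented_chromatic_index (set G_arcs) = 7"
proof
  show "is_esp_digraph G_verts (mset G_arcs)" by (rule is_esp_G)
  show "oriented_chromatic_index (set G_arcs) = 7"
    unfolding oriented_chromatic_index_def
  proof (rule Least_equality)
    show "\<exists>c. oriented_arc_coloring (set G_arcs) 7 c" using c7_ok by blast
  next
    fix r assume "\<exists>c. oriented_arc_coloring (set G_arcs) r c"
    then obtain c where "oriented_arc_coloring (set G_arcs) r c" by blast
    show "7 \<le> r"
    proof (rule ccontr)
      assume "\<not> 7 \<le> r"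
      then have "r \<le> 6" by simp
      with \<open>oriented_arc_coloring (set G_arcs) r c\<close> have "oriented_arc_coloring (set G_arcs) 6 c"
        by (rule oac_mono)
      then show False by (rule no6)
    qed
  qed
qed

end
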